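(* Let $\mathsf{K}>0$ and $\omega_{\Delta^n}=\sqrt{-1}\sum_{\alpha=1}^n\frac{2}{\mathsf{K}(1-|z^\alpha|^2)^2}dz^\alpha\wedge dz^{\bar\alpha}$ on $\Delta^n$. Let $u\colon\Delta\to\Delta^n$ be a holomorphic map which is a totally geodesic isometric embedding with respect to some Poincaré metric $\sqrt{-1}\frac{2}{\mathsf{K}'(1-|\zeta|^2)^2}d\zeta\wedge d\bar\zeta$ ($\mathsf{K}'>0$) on $\Delta$ and $\omega_{\Delta^n}$, and put $S=u(\Delta)$. Suppose $\varphi$ is a potential of $\omega_{\Delta^n}$ on an open set $V\subset\Delta^n$ meeting $S$, with $|\partial\varphi|_{\omega_{\Delta^n}}^2\le\mathsf{C}$ on $V$ for some $\mathsf{C}>0$, such that (1) the gradient vector field $\mathcal{V}=\mathrm{grad}(\varphi)$ is tangent to $S$, i.e. $\mathcal{V}(p)\in T^{(1,0)}_pS$ for each $p\in S\cap V$, and (2) $|\partial\varphi|_{\omega_{\Delta^n}}^2\equiv\mathsf{C}$ on $S\cap V$. Then $u$ has full rank $n$, i.e. every component $u^\alpha$ of $u$ is nonconstant.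
   Context: Conventions: $dd^c=\sqrt{-1}\partial\bar\partial$; a potential satisfies $dd^c\varphi=\omega_{\Delta^n}$; the gradient vector field is the $(1,0)$-vector field $\mathcal{V}$ with $\partial\varphi(v)=\langle v,\overline{\mathcal{V}}\rangle_\omega$ for all $(1,0)$-vectors $v$, and $|\partial\varphi|_\omega=|\mathcal{V}|_\omega$. For such a totally geodesic isometric holomorphic disc each component $u^\alpha$ is either constant or an automorphism of $\Delta$; the rank of $u$ is the number of nonconstant components. *)

theory Defs
  imports "HOL-Analysis.Analysis"
begin

text \<open>Points of \<open>\<Delta>^n\<close> are vectors \<open>complex^'n\<close>; the coordinate index type
  \<open>'n\<close> is finite with \<open>CARD('n) = n\<close>.\<close>

definition polydisc :: "(complex^'n) set" where
  "polydisc = {z. \<forall>\<alpha>. cmod (z $ \<alpha>) < 1}"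

text \<open>Coefficient of the metric: \<open>\<omega> = \<surd>-1 \<Sum> g_\<alpha> dz^\<alpha> \<and> dz^{\<bar>\<alpha>}\<close>.\<close>
definition pcoef :: "real \<Rightarrow> complex \<Rightarrow> real" where
  "pcoef K w = 2 / (K * (1 - (cmod w)\<^sup>2)\<^sup>2)"

text \<open>Wirtinger derivatives in the coordinate \<open>z^\<alpha>\<close> (via real directional derivatives
  in the directions \<open>\<partial>/\<partial>x^\<alpha>\<close> and \<open>\<partial>/\<partial>y^\<alpha>\<close>).\<close>
definition wirt_z :: "(complex^'n \<Rightarrow> complex) \<Rightarrow> 'n \<Rightarrow> complex^'n \<Rightarrow> complex" where
  "wirt_z F \<alpha> p = (frechet_derivative F (at p) (axis \<alpha> 1)
                    - \<i> * frechet_derivative F (at p) (axis \<alpha> \<i>)) / 2"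

definition wirt_zbar :: "(complex^'n \<Rightarrow> complex) \<Rightarrow> 'n \<Rightarrow> complex^'n \<Rightarrow> complex" where
  "wirt_zbar F \<alpha> p = (frechet_derivative F (at p) (axis \<alpha> 1)
                    + \<i> * frechet_derivative F (at p) (axis \<alpha> \<i>)) / 2"

fun iter_dd :: "(complex^'n) list \<Rightarrow> (complex^'n \<Rightarrow> complex) \<Rightarrow> complex^'n \<Rightarrow> complex" where
  "iter_dd [] F = F"
| "iter_dd (v # vs) F = (\<lambda>p. frechet_derivative (iter_dd vs F) (at p) v)"

definition smooth_on :: "(complex^'n) set \<Rightarrow> (complex^'n \<Rightarrow> complex) \<Rightarrow> bool" where
  "smooth_on V F \<longleftrightarrow> (\<forall>vs. iter_dd vs F differentiable_on V)"

text \<open>\<open>\<phi>\<close> is a (smooth, real) potential of \<open>\<omega>_{\<Delta>^n}\<close> on \<open>V\<close>: \<open>\<surd>-1 \<partial>\<bar>\<partial>\<phi> = \<omega>\<close>,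
  i.e. \<open>\<partial>^2\<phi>/\<partial>z^\<alpha>\<partial>z^{\<bar>\<beta>} = \<delta>_{\<alpha>\<beta>} g_\<alpha>\<close>.\<close>
definition is_potential :: "real \<Rightarrow> (complex^'n) set \<Rightarrow> (complex^'n \<Rightarrow> real) \<Rightarrow> bool" where
  "is_potential K V \<phi> \<longleftrightarrow> smooth_on V (\<lambda>p. complex_of_real (\<phi> p)) \<and>
     (\<forall>p\<in>V. \<forall>\<alpha> \<beta>. wirt_zbar (wirt_z (\<lambda>q. complex_of_real (\<phi> q)) \<alpha>) \<beta> p
        = (if \<alpha> = \<beta> then complex_of_real (pcoef K (p $ \<alpha>)) else 0))"

text \<open>Gradient vector field: \<open>\<partial>\<phi>(v) = \<langle>v, \<bar>\<V>\<rangle>_\<omega>\<close>, so \<open>\<V>^\<alpha> = \<phi>_{\<bar>\<alpha>}/g_\<alpha>\<close>.\<close>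
definition grad_field :: "real \<Rightarrow> (complex^'n \<Rightarrow> real) \<Rightarrow> complex^'n \<Rightarrow> complex^'n" where
  "grad_field K \<phi> p = (\<chi> \<alpha>. cnj (wirt_z (\<lambda>q. complex_of_real (\<phi> q)) \<alpha> p)
                              / complex_of_real (pcoef K (p $ \<alpha>)))"

definition dphi_norm2 :: "real \<Rightarrow> (complex^'n \<Rightarrow> real) \<Rightarrow> complex^'n \<Rightarrow> real" where
  "dphi_norm2 K \<phi> p = (\<Sum>\<alpha>\<in>UNIV. (cmod (wirt_z (\<lambda>q. complex_of_real (\<phi> q)) \<alpha> p))\<^sup>2
                              / pcoef K (p $ \<alpha>))"

definition holo_isometric_embedding :: "real \<Rightarrow> real \<Rightarrow> (complex \<Rightarrow> complex^'n) \<Rightarrow> bool" where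
  "holo_isometric_embedding K K' u \<longleftrightarrow>
     (\<forall>\<alpha>. (\<lambda>\<zeta>. u \<zeta> $ \<alpha>) holomorphic_on ball 0 1) \<and>
     u ` ball 0 1 \<subseteq> polydisc \<and> inj_on u (ball 0 1) \<and>
     (\<forall>\<zeta>\<in>ball 0 1. (\<Sum>\<alpha>\<in>UNIV. pcoef K (u \<zeta> $ \<alpha>) * (cmod (deriv (\<lambda>t. u t $ \<alpha>) \<zeta>))\<^sup>2)
                      = pcoef K' \<zeta>)"

text \<open>Totally geodesic holomorphic curve: the second fundamental form vanishes, i.e.
  \<open>\<nabla>_{u'} u' = u'' + \<Gamma>(u)(u',u')\<close> is tangent (a multiple of \<open>u'\<close>), where the only
  Christoffel symbols of \<open>\<omega>_{\<Delta>^n}\<close> are \<open>\<Gamma>^\<alpha>_{\<alpha>\<alpha>} = \<partial>_\<alpha> log g_\<alpha> = 2 \<bar>z^\<alpha>/(1-|z^\<alpha>|^2)\<close>.\<close>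
definition totally_geodesic_curve :: "(complex \<Rightarrow> complex^'n) \<Rightarrow> bool" where
  "totally_geodesic_curve u \<longleftrightarrow>
     (\<forall>\<zeta>\<in>ball 0 1. \<exists>lam::complex. \<forall>\<alpha>.
        deriv (deriv (\<lambda>t. u t $ \<alpha>)) \<zeta>
        + 2 * cnj (u \<zeta> $ \<alpha>) / complex_of_real (1 - (cmod (u \<zeta> $ \<alpha>))\<^sup>2)
          * (deriv (\<lambda>t. u t $ \<alpha>) \<zeta>)\<^sup>2
        = lam * deriv (\<lambda>t. u t $ \<alpha>) \<zeta>)"

end

theory Submission
  imports Defs "HOL-Complex_Analysis.Complex_Analysis"
begin

lemma norm_axis_c: "norm (axis (a::'n::finite) (x::complex)) = norm x"
proof -
  have "(\<Sum>i\<in>UNIV. (norm (axis a x $ i))\<^sup>2) = (norm x)\<^sup>2"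
  proof -
    have "\<And>i. (norm (axis a x $ i))\<^sup>2 = (if i = a then (norm x)\<^sup>2 else 0)" by (simp add: axis_def)
    then show ?thesis by simp
  qed
  then show ?thesis by (simp add: norm_vec_def L2_set_def)
qed

lemma axis_zero[simp]: "axis a (0::complex) = (0 :: complex^'n)"
  by (simp add: axis_def vec_eq_iff)

lemma axis_add: "axis a (x + y) = axis a x + (axis a y :: complex^'n)"
  by (simp add: axis_def vec_eq_iff)
lemma axis_scaleR: "axis a (r *\<^sub>R x) = r *\<^sub>R (axis a x :: complex^'n)"
  by (simp add: axis_def vec_eq_iff)
lemma bl_axis: "bounded_linear (axis a :: complex \<Rightarrow> complex^'n)"
  by (rule bounded_linear_intro[where K=1]) (auto simp: axis_add axis_scaleR norm_axis_c)

lemma axis_decomp: "axis a s = Re s *\<^sub>R axis a 1 + Im s *\<^sub>R (axis a \<i> :: complex^'n)"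
  by (simp add: axis_def vec_eq_iff complex_eq_iff)

lemma holo_line:
  fixes F :: "complex^'n \<Rightarrow> complex"
  assumes dF: "F differentiable (at (p + axis a t0))"
    and cr: "frechet_derivative F (at (p + axis a t0)) (axis a 1) + \<i> * frechet_derivative F (at (p + axis a t0)) (axis a \<i>) = 0"
  shows "((\<lambda>t. F (p + axis a t)) has_field_derivative frechet_derivative F (at (p + axis a t0)) (axis a 1)) (at t0)"
proof -
  define D where "D = frechet_derivative F (at (p + axis a t0))"
  have hD: "(F has_derivative D) (at (p + axis a t0))"
    using dF frechet_derivative_works D_def by blast
  have lD: "linear D" using hD has_derivative_linear by blast
  have hL: "((\<lambda>t. p + axis a t) has_derivative axis a) (at t0)"
    using has_derivative_add[OF has_derivative_const[of p] bounded_linear_imp_has_derivative[OF bl_axis]]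
    by simp
  have c: "((\<lambda>t. F (p + axis a t)) has_derivative (D \<circ> axis a)) (at t0)"
    using diff_chain_at[OF hL, of F D] hD by (simp add: o_def)
  have Di: "D (axis a \<i>) = \<i> * D (axis a 1)"
  proof -
    have "D (axis a 1) + \<i> * D (axis a \<i>) = 0" using cr D_def by simp
    then have "\<i> * (D (axis a 1) + \<i> * D (axis a \<i>)) = 0" by simp
    then show ?thesis by (simp add: algebra_simps)
  qed
  have eq: "(D \<circ> axis a) = (\<lambda>s. D (axis a 1) * s)"
  proof
    fix s
    have "(D \<circ> axis a) s = Re s *\<^sub>R D (axis a 1) + Im s *\<^sub>R D (axis a \<i>)"
      by (simp add: axis_decomp[of a s] linear_add[OF lD] linear_scale[OF lD])
    also have "\<dots> = D (axis a 1) * s"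
      by (simp add: Di scaleR_conv_of_real complex_eq_iff algebra_simps)
    finally show "(D \<circ> axis a) s = D (axis a 1) * s" .
  qed
  show ?thesis unfolding has_field_derivative_def using c eq D_def by simp
qed

definition cs4 :: "complex set" where "cs4 = {1, -1, \<i>, -\<i>}"

lemma sum_cs4: "(\<Sum>c\<in>cs4. g c) = g 1 + g (-1) + g \<i> + g (-\<i>)"
  by (simp add: cs4_def complex_eq_iff add.assoc)

lemma finite_cs4[simp]: "finite cs4" by (simp add: cs4_def)

lemma real4_ineq: "((x::real)+y+z+w)\<^sup>2 \<le> 4 * (x\<^sup>2+y\<^sup>2+z\<^sup>2+w\<^sup>2)"
proof -
  have "0 \<le> (x-y)\<^sup>2 + (x-z)\<^sup>2 + (x-w)\<^sup>2 + (y-z)\<^sup>2 + (y-w)\<^sup>2 + (z-w)\<^sup>2" by simp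
  then show ?thesis by (simp add: power2_eq_square algebra_simps)
qed

lemma cs_ineq: "(cmod (a+b+c+d))\<^sup>2 \<le> 4 * ((cmod a)\<^sup>2 + (cmod b)\<^sup>2 + (cmod c)\<^sup>2 + (cmod d)\<^sup>2)"
proof -
  have "cmod (a+b+c+d) \<le> cmod a + cmod b + cmod c + cmod d"
    by (smt (verit) norm_triangle_ineq)
  then have "(cmod (a+b+c+d))\<^sup>2 \<le> (cmod a + cmod b + cmod c + cmod d)\<^sup>2"
    by (simp add: power_mono)
  also have "\<dots> \<le> 4 * ((cmod a)\<^sup>2 + (cmod b)\<^sup>2 + (cmod c)\<^sup>2 + (cmod d)\<^sup>2)"
    by (rule real4_ineq)
  finally show ?thesis .
qed

lemma sq_ineq: "(cmod (a + b))\<^sup>2 \<ge> (cmod a)\<^sup>2 - 2 * cmod a * cmod b"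
proof -
  have t: "cmod a - cmod b \<le> cmod (a + b)" by (metis norm_diff_ineq)
  show ?thesis
  proof (cases "cmod a - cmod b \<ge> 0")
    case True
    then have "(cmod a - cmod b)\<^sup>2 \<le> (cmod (a+b))\<^sup>2" using t by (simp add: power_mono)
    moreover have "(cmod a - cmod b)\<^sup>2 = (cmod a)\<^sup>2 - 2 * cmod a * cmod b + (cmod b)\<^sup>2"
      by (simp add: power2_diff)
    moreover have "0 \<le> (cmod b)\<^sup>2" by simp
    ultimately show ?thesis by linarith
  next
    case False
    then have "(cmod a)\<^sup>2 - 2 * cmod a * cmod b \<le> 0"
      using mult_left_mono[of "cmod a" "2 * cmod b" "cmod a"]
      by (simp add: power2_eq_square algebra_simps)
    then show ?thesis using zero_le_power2[of "cmod (a+b)"] by linarith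
  qed
qed

lemma four_point:
  fixes h :: "complex \<Rightarrow> complex"
  assumes hol: "h holomorphic_on ball 0 \<delta>" and dp: "\<delta> > 0"
  shows "\<exists>E. (E \<longlongrightarrow> 0) (at_right 0) \<and>
     (\<forall>r. (\<Sum>c\<in>cs4. (cmod (h (c * of_real r)))\<^sup>2) \<ge> 4 * (cmod (h 0))\<^sup>2 - r\<^sup>2 * E r)"
proof -
  define h1 where "h1 = (\<lambda>z. if z = 0 then deriv h 0 else (h z - h 0) / (z - 0))"
  have int0: "0 \<in> interior (ball (0::complex) \<delta>)" using dp by simp
  have hol1: "h1 holomorphic_on ball 0 \<delta>"
    unfolding h1_def by (rule pole_lemma[OF hol int0])
  define h2 where "h2 = (\<lambda>z. if z = 0 then deriv h1 0 else (h1 z - h1 0) / (z - 0))"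
  have hol2: "h2 holomorphic_on ball 0 \<delta>"
    unfolding h2_def by (rule pole_lemma[OF hol1 int0])
  have cont2: "isCont h2 0"
    using hol2 dp by (meson centre_in_ball holomorphic_on_imp_continuous_on open_ball continuous_on_eq_continuous_at)
  have expand: "h z = h 0 + z * h1 0 + z\<^sup>2 * h2 z" for z
  proof (cases "z = 0")
    case True then show ?thesis by simp
  next
    case False
    have "h1 z = h1 0 + z * h2 z" using False by (simp add: h2_def)
    moreover have "h z = h 0 + z * h1 z" using False by (simp add: h1_def)
    ultimately show ?thesis by (simp add: power2_eq_square algebra_simps)
  qed
  define S where "S = (\<lambda>r::real. h2 (of_real r) + h2 (- of_real r) - h2 (\<i> * of_real r) - h2 (- \<i> * of_real r))"
  define E where "E = (\<lambda>r. 2 * cmod (h 0) * cmod (S r))"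
  have lim_c: "((\<lambda>r::real. h2 (c * of_real r)) \<longlongrightarrow> h2 0) (at_right 0)" for c
  proof -
    have "((\<lambda>r::real. c * of_real r) \<longlongrightarrow> 0) (at_right 0)"
      by (intro tendsto_eq_intros) auto
    then show ?thesis using isCont_tendsto_compose[OF cont2] by blast
  qed
  have "(S \<longlongrightarrow> h2 0 + h2 0 - h2 0 - h2 0) (at_right 0)"
    unfolding S_def
    using tendsto_diff[OF tendsto_diff[OF tendsto_add[OF lim_c[of 1] lim_c[of "-1"]] lim_c[of \<i>]] lim_c[of "-\<i>"]]
    by simp
  then have "(S \<longlongrightarrow> 0) (at_right 0)" by simp
  then have "(E \<longlongrightarrow> 2 * cmod (h 0) * cmod 0) (at_right 0)"
    unfolding E_def by (intro tendsto_intros)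
  then have limE: "(E \<longlongrightarrow> 0) (at_right 0)" by simp
  have ineq: "(\<Sum>c\<in>cs4. (cmod (h (c * of_real r)))\<^sup>2) \<ge> 4 * (cmod (h 0))\<^sup>2 - r\<^sup>2 * E r" for r
  proof -
    have sumh: "h (of_real r) + h (- of_real r) + h (\<i> * of_real r) + h (- \<i> * of_real r)
        = 4 * h 0 + of_real (r\<^sup>2) * S r"
      unfolding S_def expand[of "of_real r"] expand[of "- of_real r"] expand[of "\<i> * of_real r"]
          expand[of "- \<i> * of_real r"]
      by (simp add: power2_eq_square algebra_simps)
    have "(cmod (4 * h 0 + of_real (r\<^sup>2) * S r))\<^sup>2 \<le> 4 * (\<Sum>c\<in>cs4. (cmod (h (c * of_real r)))\<^sup>2)"
      using cs_ineq[of "h (of_real r)" "h (- of_real r)" "h (\<i> * of_real r)" "h (- \<i> * of_real r)"]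
      unfolding sumh[symmetric] sum_cs4 by (simp add: algebra_simps)
    moreover have "(cmod (4 * h 0 + of_real (r\<^sup>2) * S r))\<^sup>2 \<ge>
        (cmod (4 * h 0))\<^sup>2 - 2 * cmod (4 * h 0) * cmod (of_real (r\<^sup>2) * S r)"
      by (rule sq_ineq)
    moreover have "(cmod (4 * h 0))\<^sup>2 - 2 * cmod (4 * h 0) * cmod (of_real (r\<^sup>2) * S r)
        = 4 * (4 * (cmod (h 0))\<^sup>2 - r\<^sup>2 * E r)"
      by (simp add: E_def norm_mult power2_eq_square algebra_simps)
    ultimately show ?thesis by argo
  qed
  show ?thesis using limE ineq by blast
qed

lemma dir_limit:
  fixes F :: "complex^'n \<Rightarrow> complex"
  assumes dF: "F differentiable (at p)" and F0: "F p = 0"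
  shows "((\<lambda>r::real. F (p + axis a (c * of_real r)) / of_real r) \<longlongrightarrow> frechet_derivative F (at p) (axis a c)) (at_right 0)"
proof -
  define D where "D = frechet_derivative F (at p)"
  have hD: "(F has_derivative D) (at p)"
    using dF frechet_derivative_works D_def by blast
  have lD: "linear D" using hD has_derivative_linear by blast
  have hc: "((\<lambda>r::real. c * of_real r) has_derivative (\<lambda>r. c * of_real r)) (at 0)"
    by (intro bounded_linear_imp_has_derivative bounded_linear_mult_right[THEN bounded_linear_compose] bounded_linear_of_real)
  have hL: "((\<lambda>r::real. p + axis a (c * of_real r)) has_derivative (\<lambda>r. axis a (c * of_real r))) (at 0)"
    using has_derivative_add[OF has_derivative_const[of p] bounded_linear.has_derivative[OF bl_axis hc]]
    by simp
  have hG: "((\<lambda>r::real. F (p + axis a (c * of_real r))) has_derivative (\<lambda>r. D (axis a (c * of_real r)))) (at 0)"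
    using diff_chain_at[OF hL, of F D] hD by (simp add: o_def)
  have lin: "D (axis a (c * of_real r)) = of_real r * D (axis a c)" for r
  proof -
    have e: "axis a (c * of_real r) = r *\<^sub>R axis a c"
      by (metis axis_scaleR mult.commute scaleR_conv_of_real)
    have "D (axis a (c * of_real r)) = r *\<^sub>R D (axis a c)"
      by (simp only: e linear_scale[OF lD])
    then show ?thesis by (simp add: scaleR_conv_of_real)
  qed
  have l0: "((\<lambda>y. ((F (p + axis a (c * of_real y)) - F (p + axis a (c * of_real 0))) - D (axis a (c * of_real (y - 0)))) /\<^sub>R norm (y - 0)) \<longlongrightarrow> 0) (at (0::real))"
    using hG unfolding has_derivative_at_within[of _ _ 0 UNIV] by simp
  have "((\<lambda>y. (F (p + axis a (c * of_real y)) - of_real y * D (axis a c)) /\<^sub>R \<bar>y\<bar>) \<longlongrightarrow> 0) (at (0::real))"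
    using l0 F0 lin by simp
  then have "((\<lambda>y. (F (p + axis a (c * of_real y)) - of_real y * D (axis a c)) /\<^sub>R \<bar>y\<bar>) \<longlongrightarrow> 0) (at_right (0::real))"
    by (simp add: filterlim_at_split)
  then have "((\<lambda>y. F (p + axis a (c * of_real y)) / of_real y - D (axis a c)) \<longlongrightarrow> 0) (at_right (0::real))"
  proof (rule Lim_transform_eventually)
    show "\<forall>\<^sub>F y in at_right 0. (F (p + axis a (c * of_real y)) - of_real y * D (axis a c)) /\<^sub>R \<bar>y\<bar>
        = F (p + axis a (c * of_real y)) / of_real y - D (axis a c)"
      unfolding eventually_at_right_less[THEN eventually_mono]
      by (rule eventually_mono[OF eventually_at_right_less]) (simp add: scaleR_conv_of_real field_simps)
  qed
  then show ?thesis unfolding D_def using Lim_null by blast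
qed

lemma diffW:
  assumes sm: "smooth_on V F" and oV: "open V" and q: "q \<in> V"
  shows "wirt_z F b differentiable (at q)"
proof -
  have eq: "wirt_z F b = (\<lambda>q. (iter_dd [axis b 1] F q - \<i> * iter_dd [axis b \<i>] F q) / 2)"
    by (simp add: wirt_z_def fun_eq_iff)
  have d1: "iter_dd [axis b 1] F differentiable (at q)"
    using sm oV q unfolding smooth_on_def by (meson differentiable_on_eq_differentiable_at)
  have d2: "iter_dd [axis b \<i>] F differentiable (at q)"
    using sm oV q unfolding smooth_on_def by (meson differentiable_on_eq_differentiable_at)
  show ?thesis unfolding eq
    using d1 d2 by (intro differentiable_divide differentiable_diff differentiable_mult differentiable_const) auto
qed

lemma pcoef_pos: "K > 0 \<Longrightarrow> cmod w < 1 \<Longrightarrow> pcoef K w > 0"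
proof -
  assume K: "K > 0" and w: "cmod w < 1"
  have "cmod w * cmod w < 1 * 1" using w by (intro mult_strict_mono) auto
  then have "(cmod w)\<^sup>2 < 1" by (simp add: power2_eq_square)
  then show ?thesis using K by (simp add: pcoef_def)
qed

lemma pcoef_tendsto:
  assumes K: "K > 0" and w: "cmod w < 1"
  shows "((\<lambda>r::real. pcoef K (w + c * of_real r)) \<longlongrightarrow> pcoef K w) (at_right 0)"
proof -
  have "cmod w * cmod w < 1 * 1" using w by (intro mult_strict_mono) auto
  then have "(cmod w)\<^sup>2 < 1" by (simp add: power2_eq_square)
  then have nz: "K * (1 - (cmod w)\<^sup>2)\<^sup>2 \<noteq> 0" using K by simp
  have l: "((\<lambda>r::real. w + c * of_real r) \<longlongrightarrow> w) (at_right 0)"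
    by (intro tendsto_eq_intros) auto
  show ?thesis unfolding pcoef_def
    by (intro tendsto_intros l nz)
qed

theorem lemma3p3:
  fixes K K' C :: real
    and u :: "complex \<Rightarrow> complex^'n"
    and \<phi> :: "complex^'n \<Rightarrow> real"
    and V :: "(complex^'n) set"
  assumes "K > 0" and "K' > 0" and "C > 0"
    and "holo_isometric_embedding K K' u"
    and "totally_geodesic_curve u"
    and "open V" and "V \<subseteq> polydisc" and "V \<inter> u ` ball 0 1 \<noteq> {}"
    and "is_potential K V \<phi>"
    and "\<forall>p\<in>V. dphi_norm2 K \<phi> p \<le> C"
    and "\<forall>\<zeta>\<in>ball 0 1. u \<zeta> \<in> V \<longrightarrow>
           (\<exists>c::complex. grad_field K \<phi> (u \<zeta>) = (\<chi> \<alpha>. c * deriv (\<lambda>t. u t $ \<alpha>) \<zeta>))"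
    and "\<forall>\<zeta>\<in>ball 0 1. u \<zeta> \<in> V \<longrightarrow> dphi_norm2 K \<phi> (u \<zeta>) = C"
  shows "\<forall>\<alpha>. \<not> (\<exists>c. \<forall>\<zeta>\<in>ball 0 1. u \<zeta> $ \<alpha> = c)"
proof (rule ccontr)
  assume "\<not> (\<forall>\<alpha>. \<not> (\<exists>c. \<forall>\<zeta>\<in>ball 0 1. u \<zeta> $ \<alpha> = c))"
  then obtain a c0 where const: "\<forall>\<zeta>\<in>ball 0 1. u \<zeta> $ a = c0" by blast
  note K = \<open>K > 0\<close> and oV = \<open>open V\<close> and Vpd = \<open>V \<subseteq> polydisc\<close>
  note bound = \<open>\<forall>p\<in>V. dphi_norm2 K \<phi> p \<le> C\<close>
  define \<Phi> where "\<Phi> = (\<lambda>q. complex_of_real (\<phi> q))"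
  define W where "W = (\<lambda>b. wirt_z \<Phi> b)"
  have sm: "smooth_on V \<Phi>" and pot: "\<forall>p\<in>V. \<forall>\<alpha> \<beta>. wirt_zbar (W \<alpha>) \<beta> p
        = (if \<alpha> = \<beta> then complex_of_real (pcoef K (p $ \<alpha>)) else 0)"
    using \<open>is_potential K V \<phi>\<close> unfolding is_potential_def \<Phi>_def W_def by auto
  have dW: "\<And>b q. q \<in> V \<Longrightarrow> W b differentiable (at q)"
    unfolding W_def using diffW[OF sm oV] by blast
  have f_eq: "dphi_norm2 K \<phi> q = (\<Sum>b\<in>UNIV. (cmod (W b q))\<^sup>2 / pcoef K (q $ b))" for q
    unfolding dphi_norm2_def W_def \<Phi>_def by simp
  have inpd: "\<And>q b. q \<in> V \<Longrightarrow> cmod (q $ b) < 1" using Vpd unfolding polydisc_def by blast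
  have gpos: "\<And>q b. q \<in> V \<Longrightarrow> pcoef K (q $ b) > 0" using inpd pcoef_pos[OF K] by blast
  obtain \<zeta>0 where z0: "\<zeta>0 \<in> ball 0 1" and pV: "u \<zeta>0 \<in> V"
    using \<open>V \<inter> u ` ball 0 1 \<noteq> {}\<close> by blast
  define p where "p = u \<zeta>0"
  have pV': "p \<in> V" using pV p_def by simp
  have fp: "dphi_norm2 K \<phi> p = C" using assms(12) z0 pV p_def by blast
  have der0: "deriv (\<lambda>t. u t $ a) \<zeta>0 = 0"
  proof -
    have "((\<lambda>t. u t $ a) has_field_derivative 0) (at \<zeta>0)"
      by (rule has_field_derivative_transform_within_open[of "\<lambda>t. c0" 0 \<zeta>0 "ball 0 1"])
         (use z0 const in auto)
    then show ?thesis by (rule DERIV_imp_deriv)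
  qed
  obtain c' where cg: "grad_field K \<phi> p = (\<chi> \<alpha>. c' * deriv (\<lambda>t. u t $ \<alpha>) \<zeta>0)"
    using assms(11) z0 pV p_def by blast
  have "grad_field K \<phi> p $ a = 0" using cg der0 by simp
  then have "cnj (W a p) / complex_of_real (pcoef K (p $ a)) = 0"
    unfolding grad_field_def W_def \<Phi>_def by simp
  moreover have "pcoef K (p $ a) \<noteq> 0" using gpos[OF pV'] by (metis less_irrefl)
  ultimately have Wap: "W a p = 0" by simp
  obtain \<delta> where dpos: "\<delta> > 0" and bV: "ball p \<delta> \<subseteq> V"
    using oV pV' open_contains_ball by blast
  have lineV: "\<And>t. cmod t < \<delta> \<Longrightarrow> p + axis a t \<in> V"
    using bV by (auto simp: dist_norm norm_axis_c)
  define q where "q = (\<lambda>c (r::real). p + axis a (c * of_real r))"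
  have cmod_cs: "\<And>c. c \<in> cs4 \<Longrightarrow> cmod c = 1" by (auto simp: cs4_def)
  have qV: "\<And>c r. c \<in> cs4 \<Longrightarrow> 0 < r \<Longrightarrow> r < \<delta> \<Longrightarrow> q c r \<in> V"
    unfolding q_def using lineV cmod_cs by (simp add: norm_mult)
  have qa: "q c r $ a = p $ a + c * of_real r" for c r by (simp add: q_def)
  have qb: "b \<noteq> a \<Longrightarrow> q c r $ b = p $ b" for b c r by (simp add: q_def axis_def)
  define Q where "Q = (\<lambda>b r. \<Sum>c\<in>cs4. (cmod (W b (q c r)))\<^sup>2 / pcoef K (q c r $ b))"
  define G where "G = (\<lambda>b. pcoef K (p $ b))"
  have split: "(\<Sum>c\<in>cs4. dphi_norm2 K \<phi> (q c r)) - 4 * C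
      = (\<Sum>b\<in>UNIV. Q b r - 4 * (cmod (W b p))\<^sup>2 / G b)" for r
  proof -
    have "(\<Sum>c\<in>cs4. dphi_norm2 K \<phi> (q c r)) = (\<Sum>b\<in>UNIV. Q b r)"
      unfolding f_eq Q_def by (rule sum.swap)
    moreover have "4 * C = (\<Sum>b\<in>UNIV. 4 * (cmod (W b p))\<^sup>2 / G b)"
      unfolding fp[symmetric] f_eq G_def by (simp add: sum_distrib_left)
    ultimately show ?thesis by (simp add: sum_subtractf)
  qed
  have evA: "\<forall>\<^sub>F r in at_right 0. (\<Sum>c\<in>cs4. dphi_norm2 K \<phi> (q c r)) \<le> 4 * C"
  proof -
    have "\<forall>\<^sub>F r in at_right (0::real). r < \<delta>"
      using eventually_at_right_real[OF dpos] by (rule eventually_mono) auto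
    moreover have "\<forall>\<^sub>F r in at_right (0::real). 0 < r" by (rule eventually_at_right_less)
    ultimately show ?thesis
    proof eventually_elim
      case (elim r)
      have "(\<Sum>c\<in>cs4. dphi_norm2 K \<phi> (q c r)) \<le> (\<Sum>c\<in>cs4. C)"
        using elim qV bound by (intro sum_mono) blast
      also have "\<dots> = 4 * C" by (subst sum_cs4) simp
      finally show ?case .
    qed
  qed
  have other: "\<exists>E. (E \<longlongrightarrow> 0) (at_right 0) \<and> (\<forall>r. Q b r - 4 * (cmod (W b p))\<^sup>2 / G b \<ge> - (r\<^sup>2 * E r))"
    if ba: "b \<noteq> a" for b
  proof -
    define h where "h = (\<lambda>t. W b (p + axis a t))"
    have hol: "h holomorphic_on ball 0 \<delta>"
      unfolding holomorphic_on_def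
    proof
      fix t0 :: complex assume t0: "t0 \<in> ball 0 \<delta>"
      have inV: "p + axis a t0 \<in> V" using t0 lineV by simp
      have "wirt_zbar (W b) a (p + axis a t0) = 0" using pot inV ba by simp
      then have cr: "frechet_derivative (W b) (at (p + axis a t0)) (axis a 1)
          + \<i> * frechet_derivative (W b) (at (p + axis a t0)) (axis a \<i>) = 0"
        unfolding wirt_zbar_def by simp
      have "(h has_field_derivative frechet_derivative (W b) (at (p + axis a t0)) (axis a 1)) (at t0)"
        unfolding h_def by (rule holo_line[OF dW[OF inV] cr])
      then show "h field_differentiable at t0 within ball 0 \<delta>"
        using field_differentiable_at_within field_differentiable_def by blast
    qed
    obtain E where limE: "(E \<longlongrightarrow> 0) (at_right 0)"
      and ineq: "\<forall>r. (\<Sum>c\<in>cs4. (cmod (h (c * of_real r)))\<^sup>2) \<ge> 4 * (cmod (h 0))\<^sup>2 - r\<^sup>2 * E r"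
      using four_point[OF hol dpos] by blast
    have Gb: "G b > 0" unfolding G_def using gpos[OF pV'] by blast
    have h0: "h 0 = W b p" by (simp add: h_def)
    have Qb: "Q b r = (\<Sum>c\<in>cs4. (cmod (h (c * of_real r)))\<^sup>2) / G b" for r
      unfolding Q_def G_def h_def q_def
      using qb[OF ba] by (simp add: sum_divide_distrib q_def)
    have "Q b r - 4 * (cmod (W b p))\<^sup>2 / G b \<ge> - (r\<^sup>2 * (E r / G b))" for r
    proof -
      have "Q b r - 4 * (cmod (W b p))\<^sup>2 / G b
          = ((\<Sum>c\<in>cs4. (cmod (h (c * of_real r)))\<^sup>2) - 4 * (cmod (h 0))\<^sup>2) / G b"
        by (simp add: Qb h0 diff_divide_distrib)
      also have "\<dots> \<ge> (- (r\<^sup>2 * E r)) / G b"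
        using ineq[rule_format, of r] Gb by (intro divide_right_mono) linarith+
      finally show ?thesis by simp
    qed
    moreover have "((\<lambda>r. E r / G b) \<longlongrightarrow> 0) (at_right 0)"
      using tendsto_divide[OF limE tendsto_const[of "G b"]] Gb by simp
    ultimately show ?thesis by blast
  qed
  then obtain E where Eprop: "\<forall>b. b \<noteq> a \<longrightarrow> (E b \<longlongrightarrow> 0) (at_right 0) \<and>
      (\<forall>r. Q b r - 4 * (cmod (W b p))\<^sup>2 / G b \<ge> - (r\<^sup>2 * E b r))"
    by metis
  define D where "D = frechet_derivative (W a) (at p)"
  define M where "M = (\<Sum>c\<in>cs4. (cmod (D (axis a c)))\<^sup>2 / G a)"
  have limQ: "((\<lambda>r. Q a r / r\<^sup>2) \<longlongrightarrow> M) (at_right 0)"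
  proof -
    have l: "((\<lambda>r. \<Sum>c\<in>cs4. (cmod (W a (q c r) / of_real r))\<^sup>2 / pcoef K (p $ a + c * of_real r)) \<longlongrightarrow> M) (at_right 0)"
      unfolding M_def G_def q_def D_def
      by (intro tendsto_sum tendsto_divide tendsto_power tendsto_norm dir_limit[OF dW[OF pV'] Wap]
            pcoef_tendsto[OF K inpd[OF pV']]) (use gpos[OF pV'] in \<open>auto simp: less_le\<close>)
    show ?thesis
    proof (rule Lim_transform_eventually[OF l])
      show "\<forall>\<^sub>F r in at_right 0. (\<Sum>c\<in>cs4. (cmod (W a (q c r) / of_real r))\<^sup>2 / pcoef K (p $ a + c * of_real r))
          = Q a r / r\<^sup>2"
        by (rule eventually_mono[OF eventually_at_right_less])
           (simp add: Q_def qa sum_divide_distrib norm_divide power_divide mult.commute)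
    qed
  qed
  have Mpos: "M > 0"
  proof -
    have Ga: "G a > 0" unfolding G_def using gpos[OF pV'] by blast
    have "wirt_zbar (W a) a p = complex_of_real (pcoef K (p $ a))" using pot pV' by simp
    then have "D (axis a 1) + \<i> * D (axis a \<i>) \<noteq> 0"
      unfolding wirt_zbar_def D_def using Ga G_def by auto
    then have nz: "D (axis a 1) \<noteq> 0 \<or> D (axis a \<i>) \<noteq> 0" by auto
    have "M = (cmod (D (axis a 1)))\<^sup>2 / G a + (cmod (D (axis a (-1))))\<^sup>2 / G a
        + (cmod (D (axis a \<i>)))\<^sup>2 / G a + (cmod (D (axis a (-\<i>))))\<^sup>2 / G a"
      unfolding M_def by (rule sum_cs4)
    moreover have "(cmod (D (axis a 1)))\<^sup>2 / G a + (cmod (D (axis a \<i>)))\<^sup>2 / G a > 0"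
      using nz Ga by (auto intro: add_pos_nonneg add_nonneg_pos)
    moreover have "(cmod (D (axis a (-1))))\<^sup>2 / G a \<ge> 0" "(cmod (D (axis a (-\<i>))))\<^sup>2 / G a \<ge> 0"
      using Ga by auto
    ultimately show ?thesis by linarith
  qed
  define Es where "Es = (\<lambda>r. \<Sum>b\<in>UNIV - {a}. E b r)"
  have limEs: "(Es \<longlongrightarrow> 0) (at_right 0)"
    unfolding Es_def using Eprop by (intro tendsto_null_sum) auto
  have "((\<lambda>r. Q a r / r\<^sup>2 - Es r) \<longlongrightarrow> M - 0) (at_right 0)"
    by (intro tendsto_diff limQ limEs)
  then have lM: "((\<lambda>r. Q a r / r\<^sup>2 - Es r) \<longlongrightarrow> M) (at_right 0)" by simp
  have evP: "\<forall>\<^sub>F r in at_right 0. Q a r / r\<^sup>2 - Es r > 0"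
    by (rule order_tendstoD(1)[OF lM Mpos])
  have evB: "\<forall>\<^sub>F r in at_right 0. (\<Sum>c\<in>cs4. dphi_norm2 K \<phi> (q c r)) > 4 * C"
    using evP eventually_at_right_less[of "0::real"]
  proof eventually_elim
    case (elim r)
    have r2: "r\<^sup>2 > 0" using elim by simp
    have "(\<Sum>b\<in>UNIV. Q b r - 4 * (cmod (W b p))\<^sup>2 / G b)
        = (Q a r - 4 * (cmod (W a p))\<^sup>2 / G a) + (\<Sum>b\<in>UNIV - {a}. Q b r - 4 * (cmod (W b p))\<^sup>2 / G b)"
      by (simp add: sum.remove)
    also have "\<dots> \<ge> Q a r + (\<Sum>b\<in>UNIV - {a}. - (r\<^sup>2 * E b r))"
      using Eprop Wap by (intro add_mono sum_mono) auto
    also have "Q a r + (\<Sum>b\<in>UNIV - {a}. - (r\<^sup>2 * E b r)) = r\<^sup>2 * (Q a r / r\<^sup>2 - Es r)"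
      using r2 by (simp add: Es_def sum_negf sum_distrib_left algebra_simps)
    finally have "(\<Sum>b\<in>UNIV. Q b r - 4 * (cmod (W b p))\<^sup>2 / G b) > 0"
      using elim r2 by (smt (verit) mult_pos_pos)
    then show ?case using split[of r] by linarith
  qed
  have "eventually (\<lambda>r. False) (at_right (0::real))"
    using eventually_conj[OF evA evB] by (rule eventually_mono) linarith
  then show False by (simp add: eventually_False)
qed

end
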